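(* For each of the following sets $\mathcal S\subseteq\{0,1\}^3$, and for every set obtained from any of them by any sequence of coordinate negations and coordinate permutations, $\rho(\mathcal S)=3$: $\{000,010,100,101\}$, $\{000,001,010,011,100\}$, $\{000,001,010,011,100,101\}$, $\{000,001,010,101,110\}$, $\{000,001,010,011,100,111\}$, $\{000,001,010,101,110,111\}$, $\{0,1\}^3\setminus\{111\}$, and $\{0,1\}^3$.
   Context: Binary triples $(x_1,x_2,x_3)\in\{0,1\}^3$ are written $x_1x_2x_3$. Let $\mathcal S\subseteq\{0,1\}^3$ be nonempty. A distribution scheme with domain $\mathcal S$ is a pair $(P_R,\psi)$ where $P_R$ is a probability distribution on a finite set $\mathcal R$ and $\psi:\mathcal S\times\mathcal R\to\mathcal W_{12}\times\mathcal W_{23}\times\mathcal W_{31}$ for finite share alphabets. Given $\mathbf x=(x_1,x_2,x_3)\in\mathcal S$, the shares are $(W_{12},W_{23},W_{31})=\psi(\mathbf x,R)$, $R\sim P_R$. Party $P_1$ sees $V_1=(W_{12},W_{31})$, $P_2$ sees $V_2=(W_{23},W_{12})$, $P_3$ sees $V_3=(W_{31},W_{23})$. It is a 3SS scheme if (Correctness) for each $i$ there is a function $\phi_i$ with $\Pr[\phi_i(V_i)=x_i]=1$ for every $\mathbf x\in\mathcal S$, and (Perfect privacy) for each $i$ and all $\mathbf x,\mathbf x'\in\mathcal S$ with $x_i=x'_i$, $V_i$ has the same distribution under secret $\mathbf x$ as under $\mathbf x'$. The randomness complexity $\rho(\mathcal S)$ is the minimum of $\log_2|\mathcal R|$ over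 all 3SS schemes with domain $\mathcal S$. A coordinate negation maps $\mathcal S$ to $\{\mathbf x\oplus e_i:\mathbf x\in\mathcal S\}$; a coordinate permutation permutes the three coordinates of every element. *)

theory Defs
  imports Main "HOL-Library.Log_Nat"
begin

datatype idx = I1 | I2 | I3

type_synonym secret = "idx \<Rightarrow> bool"

definition trip :: "nat \<Rightarrow> nat \<Rightarrow> nat \<Rightarrow> secret" where
  "trip a b c = (\<lambda>i. case i of I1 \<Rightarrow> a = 1 | I2 \<Rightarrow> b = 1 | I3 \<Rightarrow> c = 1)"

text \<open>Shares (W12, W23, W31); finite share alphabets are encoded injectively into nat.\<close>
type_synonym shares = "nat \<times> nat \<times> nat"

fun view :: "idx \<Rightarrow> shares \<Rightarrow> nat \<times> nat" where
  "view I1 (w12, w23, w31) = (w12, w31)"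
| "view I2 (w12, w23, w31) = (w23, w12)"
| "view I3 (w12, w23, w31) = (w31, w23)"

definition is_3SS :: "secret set \<Rightarrow> nat set \<Rightarrow> (nat \<Rightarrow> real) \<Rightarrow> (secret \<Rightarrow> nat \<Rightarrow> shares) \<Rightarrow> bool" where
  "is_3SS S R P psi \<longleftrightarrow>
     finite R \<and> (\<forall>r\<in>R. 0 \<le> P r) \<and> sum P R = 1 \<and>
     (\<forall>i. \<exists>phi. \<forall>x\<in>S. \<forall>r\<in>R. 0 < P r \<longrightarrow> phi (view i (psi x r)) = x i) \<and>
     (\<forall>i. \<forall>x\<in>S. \<forall>x'\<in>S. x i = x' i \<longrightarrow>
        (\<forall>v. sum P {r\<in>R. view i (psi x r) = v} = sum P {r\<in>R. view i (psi x' r) = v}))"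

definition rho :: "secret set \<Rightarrow> real" where
  "rho S = log 2 (real (LEAST n. \<exists>R P psi. is_3SS S R P psi \<and> card R = n))"

definition negate :: "idx \<Rightarrow> secret set \<Rightarrow> secret set" where
  "negate i S = (\<lambda>x. x(i := \<not> x i)) ` S"

definition permute :: "(idx \<Rightarrow> idx) \<Rightarrow> secret set \<Rightarrow> secret set" where
  "permute \<sigma> S = (\<lambda>x. x \<circ> \<sigma>) ` S"

inductive_set equiv_sets :: "secret set \<Rightarrow> secret set set" for S0 where
  base: "S0 \<in> equiv_sets S0"
| neg: "T \<in> equiv_sets S0 \<Longrightarrow> negate i T \<in> equiv_sets S0"
| perm: "T \<in> equiv_sets S0 \<Longrightarrow> bij \<sigma> \<Longrightarrow> permute \<sigma> T \<in> equiv_sets S0"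

end

theory Submission
  imports Defs
begin

lemma img1: "(u,t) \<in> view I1 ` S \<Longrightarrow> \<exists>v. (u,v,t) \<in> S" by force
lemma img2: "(v,u) \<in> view I2 ` S \<Longrightarrow> \<exists>t. (u,v,t) \<in> S" by force
lemma img3: "(t,v) \<in> view I3 ` S \<Longrightarrow> \<exists>u. (u,v,t) \<in> S" by force
lemma mem1: "(u,v,t) \<in> S \<Longrightarrow> (u,t) \<in> view I1 ` S" by force
lemma mem2: "(u,v,t) \<in> S \<Longrightarrow> (v,u) \<in> view I2 ` S" by force
lemma mem3: "(u,v,t) \<in> S \<Longrightarrow> (t,v) \<in> view I3 ` S" by force

lemma double:
  assumes fin: "finite A" and h: "\<forall>y\<in>Y. \<exists>a b. a \<noteq> b \<and> (a,y)\<in>A \<and> (b,y)\<in>A"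
  shows "2 * card Y \<le> card A"
proof -
  have "\<forall>y\<in>Y. \<exists>ab. fst ab \<noteq> snd ab \<and> (fst ab, y) \<in> A \<and> (snd ab, y) \<in> A" using h by simp
  from bchoice[OF this] obtain h where hh: "\<forall>y\<in>Y. fst (h y) \<noteq> snd (h y) \<and> (fst (h y), y) \<in> A \<and> (snd (h y), y) \<in> A"
    by blast
  have "Y \<subseteq> snd ` A"
  proof
    fix y assume "y \<in> Y"
    hence "(fst (h y), y) \<in> A" using hh by blast
    thus "y \<in> snd ` A" by (rule rev_image_eqI) simp
  qed
  hence finY: "finite Y" by (rule finite_surj[OF fin])
  let ?X1 = "(\<lambda>y. (fst (h y), y)) ` Y" and ?X2 = "(\<lambda>y. (snd (h y), y)) ` Y"
  have c1: "card ?X1 = card Y" by (rule card_image) (simp add: inj_on_def)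
  have c2: "card ?X2 = card Y" by (rule card_image) (simp add: inj_on_def)
  have d: "?X1 \<inter> ?X2 = {}" using hh by fastforce
  have s: "?X1 \<union> ?X2 \<subseteq> A" using hh by blast
  have "card (?X1 \<union> ?X2) = card ?X1 + card ?X2"
    by (rule card_Un_disjoint) (simp_all add: finY d)
  moreover have "card (?X1 \<union> ?X2) \<le> card A" using s fin by (rule card_mono[rotated])
  ultimately show ?thesis using c1 c2 by simp
qed

lemma comb:
  fixes Sa Sb Sc Sd :: "shares set"
  assumes fin: "finite Sa" and ne: "Sa \<noteq> {}"
  and ab1: "view I1 ` Sa = view I1 ` Sb" and ab3: "view I3 ` Sa = view I3 ` Sb"
  and ab2: "view I2 ` Sa \<inter> view I2 ` Sb = {}"
  and ac2: "view I2 ` Sa = view I2 ` Sc" and ac3: "view I3 ` Sa = view I3 ` Sc"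
  and ac1: "view I1 ` Sa \<inter> view I1 ` Sc = {}"
  and ad2: "view I2 ` Sa = view I2 ` Sd"
  and cd1: "view I1 ` Sc = view I1 ` Sd" and cd3: "view I3 ` Sc \<inter> view I3 ` Sd = {}"
  shows "8 \<le> card Sa"
proof -
  define A1 where "A1 = view I1 ` Sa"
  define A2 where "A2 = view I2 ` Sa"
  define T where "T = snd ` A1"
  have finA1: "finite A1" "finite A2" using fin by (auto simp: A1_def A2_def)
  have cA: "card A1 \<le> card Sa" "card A2 \<le> card Sa" using fin by (auto simp: A1_def A2_def card_image_le)
  have F1: "\<forall>t\<in>T. \<exists>u1 u2. u1 \<noteq> u2 \<and> (u1,t)\<in>A1 \<and> (u2,t)\<in>A1"
  proof
    fix t assume "t \<in> T"
    then obtain u0 where "(u0,t) \<in> A1" by (auto simp: T_def)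
    then obtain v where p: "(u0,v,t) \<in> Sa" using img1 A1_def by blast
    have "(t,v) \<in> view I3 ` Sb" using mem3[OF p] ab3 by simp
    then obtain u' where q: "(u',v,t) \<in> Sb" using img3 by blast
    have q1: "(u',t) \<in> A1" using mem1[OF q] ab1 A1_def by simp
    have "u' \<noteq> u0" using mem2[OF p] mem2[OF q] ab2 by auto
    thus "\<exists>u1 u2. u1 \<noteq> u2 \<and> (u1,t)\<in>A1 \<and> (u2,t)\<in>A1" using q1 mem1[OF p] A1_def by blast
  qed
  have F2: "\<exists>t1 t2. t1 \<noteq> t2 \<and> (u,t1) \<in> view I1 ` Sc \<and> (u,t2) \<in> view I1 ` Sc \<and> t1 \<in> T \<and> t2 \<in> T"
    if p: "(u,v,t) \<in> Sa" for u v t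
  proof -
    have "(v,u) \<in> view I2 ` Sd" using mem2[OF p] ad2 by simp
    then obtain t1 where d: "(u,v,t1) \<in> Sd" using img2 by blast
    have "(v,u) \<in> view I2 ` Sc" using mem2[OF p] ac2 by simp
    then obtain t2 where c: "(u,v,t2) \<in> Sc" using img2 by blast
    have ne12: "t1 \<noteq> t2" using mem3[OF c] mem3[OF d] cd3 by auto
    have c1: "(u,t1) \<in> view I1 ` Sc" using mem1[OF d] cd1 by simp
    then obtain v' where c': "(u,v',t1) \<in> Sc" using img1 by blast
    have "(t1,v') \<in> view I3 ` Sa" using mem3[OF c'] ac3 by simp
    then obtain u'' where "(u'',v',t1) \<in> Sa" using img3 by blast
    hence T1: "t1 \<in> T" unfolding T_def A1_def by force
    have "(t2,v) \<in> view I3 ` Sa" using mem3[OF c] ac3 by simp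
    then obtain u3 where "(u3,v,t2) \<in> Sa" using img3 by blast
    hence T2: "t2 \<in> T" unfolding T_def A1_def by force
    show ?thesis using ne12 c1 mem1[OF c] T1 T2 by blast
  qed
  have F3: "\<exists>v1 v2. v1 \<noteq> v2 \<and> (v1,u) \<in> A2 \<and> (v2,u) \<in> A2"
    if p: "(u,v,t) \<in> Sa" for u v t
  proof -
    have "(v,u) \<in> view I2 ` Sd" using mem2[OF p] ad2 by simp
    then obtain t1 where d: "(u,v,t1) \<in> Sd" using img2 by blast
    have "(u,t1) \<in> view I1 ` Sc" using mem1[OF d] cd1 by simp
    then obtain v2 where c: "(u,v2,t1) \<in> Sc" using img1 by blast
    have "v2 \<noteq> v" using mem3[OF c] mem3[OF d] cd3 by auto
    moreover have "(v2,u) \<in> A2" using mem2[OF c] ac2 A2_def by simp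
    ultimately show ?thesis using mem2[OF p] A2_def by blast
  qed
  have cT: "2 * card T \<le> card A1" by (rule double[OF finA1(1) F1])
  have finT: "finite T" using finA1 T_def by simp
  obtain u0 v0 t0 where p0: "(u0,v0,t0) \<in> Sa" using ne by (metis ex_in_conv prod_cases3)
  show ?thesis
  proof (cases "inj_on fst A1")
    case True
    obtain t1 t2 where tt: "t1 \<noteq> t2" "t1 \<in> T" "t2 \<in> T" using F2[OF p0] by blast
    have "card {t1,t2} \<le> card T" using tt finT by (intro card_mono) auto
    hence "2 \<le> card T" using tt by simp
    have "card (fst ` A1) = card A1" using True by (rule card_image)
    have "\<forall>u\<in>fst ` A1. \<exists>a b. a \<noteq> b \<and> (a,u)\<in>A2 \<and> (b,u)\<in>A2"
    proof
      fix u assume "u \<in> fst ` A1"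
      then obtain t where "(u,t) \<in> A1" by force
      then obtain v where "(u,v,t) \<in> Sa" using img1 A1_def by blast
      thus "\<exists>a b. a \<noteq> b \<and> (a,u)\<in>A2 \<and> (b,u)\<in>A2" using F3 by blast
    qed
    hence "2 * card (fst ` A1) \<le> card A2" by (rule double[OF finA1(2)])
    thus ?thesis using cA cT \<open>2 \<le> card T\<close> \<open>card (fst ` A1) = card A1\<close> by linarith
  next
    case False
    then obtain p q where pq: "p \<in> A1" "q \<in> A1" "fst p = fst q" "p \<noteq> q" unfolding inj_on_def by blast
    obtain u t t' where "p = (u,t)" "q = (u,t')" using pq(3) by (metis prod.collapse)
    hence uu: "(u,t) \<in> A1" "(u,t') \<in> A1" "t \<noteq> t'" using pq by auto
    then obtain v where p: "(u,v,t) \<in> Sa" using img1 A1_def by blast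
    obtain t1 t2 where tt: "t1 \<noteq> t2" "(u,t1) \<in> view I1 ` Sc" "(u,t2) \<in> view I1 ` Sc" "t1 \<in> T" "t2 \<in> T"
      using F2[OF p] by blast
    have nn: "(u,t1) \<notin> A1" "(u,t2) \<notin> A1" using tt ac1 A1_def by auto
    have "t \<in> T" "t' \<in> T" using uu T_def by force+
    hence "card {t,t',t1,t2} \<le> card T" using tt(4,5) finT by (intro card_mono) simp_all
    moreover have "t1 \<noteq> t" "t1 \<noteq> t'" "t2 \<noteq> t" "t2 \<noteq> t'" using nn uu by auto
    hence "card {t,t',t1,t2} = 4" using uu(3) tt(1) by simp
    ultimately show ?thesis using cT cA by linarith
  qed
qed


lemma D3SS: assumes "is_3SS S R P psi"
  shows "finite R" "\<forall>r\<in>R. 0 \<le> P r" "sum P R = 1"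
   "\<forall>i. \<exists>phi. \<forall>x\<in>S. \<forall>r\<in>R. 0 < P r \<longrightarrow> phi (view i (psi x r)) = x i"
   "\<forall>i. \<forall>x\<in>S. \<forall>x'\<in>S. x i = x' i \<longrightarrow>
        (\<forall>v. sum P {r\<in>R. view i (psi x r) = v} = sum P {r\<in>R. view i (psi x' r) = v})"
proof -
  note c = assms[unfolded is_3SS_def]
  show "finite R" using c by (elim conjE) assumption
  show "\<forall>r\<in>R. 0 \<le> P r" using c by (elim conjE) assumption
  show "sum P R = 1" using c by (elim conjE) assumption
  show "\<forall>i. \<exists>phi. \<forall>x\<in>S. \<forall>r\<in>R. 0 < P r \<longrightarrow> phi (view i (psi x r)) = x i"
    using c by (elim conjE) assumption
  show "\<forall>i. \<forall>x\<in>S. \<forall>x'\<in>S. x i = x' i \<longrightarrow>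
        (\<forall>v. sum P {r\<in>R. view i (psi x r) = v} = sum P {r\<in>R. view i (psi x' r) = v})"
    using c by (elim conjE) assumption
qed

lemma sum_pos_iff:
  assumes fin: "finite R" and nn: "\<forall>r\<in>R. 0 \<le> (P::nat \<Rightarrow> real) r"
  shows "(0 < sum P {r\<in>R. Q r}) = (\<exists>r\<in>R. Q r \<and> 0 < P r)"
proof
  assume pos: "0 < sum P {r\<in>R. Q r}"
  show "\<exists>r\<in>R. Q r \<and> 0 < P r"
  proof (rule ccontr)
    assume "\<not> (\<exists>r\<in>R. Q r \<and> 0 < P r)"
    hence "\<forall>r\<in>{r\<in>R. Q r}. P r = 0"
    proof (intro ballI)
      fix r assume a: "\<not> (\<exists>r\<in>R. Q r \<and> 0 < P r)" and r: "r \<in> {r\<in>R. Q r}"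
      hence "0 \<le> P r" "\<not> 0 < P r" using nn by auto
      thus "P r = 0" by linarith
    qed
    hence "sum P {r\<in>R. Q r} = 0" by simp
    thus False using pos by simp
  qed
next
  assume "\<exists>r\<in>R. Q r \<and> 0 < P r"
  then obtain r where r: "r \<in> R" "Q r" "0 < P r" by blast
  show "0 < sum P {r\<in>R. Q r}"
    by (rule sum_pos2[where i=r]) (use fin r nn in auto)
qed

lemma supp_eq:
  assumes H: "is_3SS S R P psi" and x: "x\<in>S" "x'\<in>S" "x i = x' i"
  shows "view i ` psi x ` {r\<in>R. 0<P r} = view i ` psi x' ` {r\<in>R. 0<P r}"
proof -
  have fin: "finite R" and nn: "\<forall>r\<in>R. 0 \<le> P r" using D3SS[OF H] by simp_all
  have pr: "\<forall>v. sum P {r\<in>R. view i (psi x r) = v} = sum P {r\<in>R. view i (psi x' r) = v}"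
    using D3SS(5)[OF H, rule_format, OF x] by blast
  have key: "(v \<in> view i ` psi y ` {r\<in>R. 0<P r}) = (0 < sum P {r\<in>R. view i (psi y r) = v})" for y v
    by (subst sum_pos_iff[OF fin nn]) auto
  show ?thesis
  proof (rule set_eqI)
    fix v show "(v \<in> view i ` psi x ` {r\<in>R. 0<P r}) = (v \<in> view i ` psi x' ` {r\<in>R. 0<P r})"
      using key[of v x] key[of v x'] pr by simp
  qed
qed

lemma supp_disj:
  assumes H: "is_3SS S R P psi" and x: "x\<in>S" "x'\<in>S" "x i \<noteq> x' i"
  shows "view i ` psi x ` {r\<in>R. 0<P r} \<inter> view i ` psi x' ` {r\<in>R. 0<P r} = {}"
proof -
  obtain phi where ph: "\<forall>x\<in>S. \<forall>r\<in>R. 0 < P r \<longrightarrow> phi (view i (psi x r)) = x i"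
    using D3SS(4)[OF H] by blast
  { fix v assume "v \<in> view i ` psi x ` {r\<in>R. 0<P r}" "v \<in> view i ` psi x' ` {r\<in>R. 0<P r}"
    then obtain r r' where rr: "r \<in> R" "0 < P r" "v = view i (psi x r)" "r' \<in> R" "0 < P r'" "v = view i (psi x' r')"
      by auto
    have "phi (view i (psi x r)) = x i" using ph x(1) rr(1,2) by blast
    hence "phi v = x i" using rr(3) by simp
    moreover have "phi (view i (psi x' r')) = x' i" using ph x(2) rr(4,5) by blast
    hence "phi v = x' i" using rr(6) by simp
    ultimately have False using x(3) by simp }
  thus ?thesis by blast
qed

definition A0 :: "secret set" where "A0 = {trip 0 0 0, trip 0 1 0, trip 1 0 0, trip 1 0 1}"

lemma LBmain:
  assumes H: "is_3SS S R P psi" and sub: "A0 \<subseteq> S"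
  shows "8 \<le> card R"
proof -
  define Rp where "Rp = {r\<in>R. 0 < P r}"
  have fin: "finite R" and nn: "\<forall>r\<in>R. 0 \<le> P r" and s1: "sum P R = 1" using D3SS[OF H] by simp_all
  have "0 < sum P {r\<in>R. True}" using s1 by simp
  hence "\<exists>r\<in>R. 0 < P r" by (subst (asm) sum_pos_iff[OF fin nn]) simp
  hence ne: "psi (trip 0 0 0) ` Rp \<noteq> {}" unfolding Rp_def by blast
  have finRp: "finite Rp" using fin unfolding Rp_def by simp
  have m: "trip 0 0 0 \<in> S" "trip 0 1 0 \<in> S" "trip 1 0 0 \<in> S" "trip 1 0 1 \<in> S"
    using sub unfolding A0_def by auto
  have ab1: "view I1 ` psi (trip 0 0 0) ` Rp = view I1 ` psi (trip 0 1 0) ` Rp"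
    unfolding Rp_def by (rule supp_eq[OF H m(1) m(2)]) (simp add: trip_def)
  have ab3: "view I3 ` psi (trip 0 0 0) ` Rp = view I3 ` psi (trip 0 1 0) ` Rp"
    unfolding Rp_def by (rule supp_eq[OF H m(1) m(2)]) (simp add: trip_def)
  have ab2: "view I2 ` psi (trip 0 0 0) ` Rp \<inter> view I2 ` psi (trip 0 1 0) ` Rp = {}"
    unfolding Rp_def by (rule supp_disj[OF H m(1) m(2)]) (simp add: trip_def)
  have ac2: "view I2 ` psi (trip 0 0 0) ` Rp = view I2 ` psi (trip 1 0 0) ` Rp"
    unfolding Rp_def by (rule supp_eq[OF H m(1) m(3)]) (simp add: trip_def)
  have ac3: "view I3 ` psi (trip 0 0 0) ` Rp = view I3 ` psi (trip 1 0 0) ` Rp"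
    unfolding Rp_def by (rule supp_eq[OF H m(1) m(3)]) (simp add: trip_def)
  have ac1: "view I1 ` psi (trip 0 0 0) ` Rp \<inter> view I1 ` psi (trip 1 0 0) ` Rp = {}"
    unfolding Rp_def by (rule supp_disj[OF H m(1) m(3)]) (simp add: trip_def)
  have ad2: "view I2 ` psi (trip 0 0 0) ` Rp = view I2 ` psi (trip 1 0 1) ` Rp"
    unfolding Rp_def by (rule supp_eq[OF H m(1) m(4)]) (simp add: trip_def)
  have cd1: "view I1 ` psi (trip 1 0 0) ` Rp = view I1 ` psi (trip 1 0 1) ` Rp"
    unfolding Rp_def by (rule supp_eq[OF H m(3) m(4)]) (simp add: trip_def)
  have cd3: "view I3 ` psi (trip 1 0 0) ` Rp \<inter> view I3 ` psi (trip 1 0 1) ` Rp = {}"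
    unfolding Rp_def by (rule supp_disj[OF H m(3) m(4)]) (simp add: trip_def)
  have "8 \<le> card (psi (trip 0 0 0) ` Rp)"
    using finRp ne by (intro comb[OF _ _ ab1 ab3 ab2 ac2 ac3 ac1 ad2 cd1 cd3]) simp_all
  also have "card (psi (trip 0 0 0) ` Rp) \<le> card Rp" using finRp by (rule card_image_le)
  also have "card Rp \<le> card R" using fin unfolding Rp_def by (intro card_mono) auto
  finally show ?thesis .
qed


lemma is_3SS_mono:
  assumes H: "is_3SS S R P psi" and sub: "S' \<subseteq> S"
  shows "is_3SS S' R P psi"
proof -
  note D = D3SS[OF H]
  have c4: "\<forall>i. \<exists>phi. \<forall>x\<in>S'. \<forall>r\<in>R. 0 < P r \<longrightarrow> phi (view i (psi x r)) = x i"
  proof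
    fix i
    obtain phi where "\<forall>x\<in>S. \<forall>r\<in>R. 0 < P r \<longrightarrow> phi (view i (psi x r)) = x i" using D(4) by blast
    hence "\<forall>x\<in>S'. \<forall>r\<in>R. 0 < P r \<longrightarrow> phi (view i (psi x r)) = x i" using sub by blast
    thus "\<exists>phi. \<forall>x\<in>S'. \<forall>r\<in>R. 0 < P r \<longrightarrow> phi (view i (psi x r)) = x i" by blast
  qed
  have c5: "\<forall>i. \<forall>x\<in>S'. \<forall>x'\<in>S'. x i = x' i \<longrightarrow>
        (\<forall>v. sum P {r\<in>R. view i (psi x r) = v} = sum P {r\<in>R. view i (psi x' r) = v})"
  proof (intro allI ballI impI)
    fix i x x' v assume "x \<in> S'" "x' \<in> S'" "x i = x' i"
    thus "sum P {r\<in>R. view i (psi x r) = v} = sum P {r\<in>R. view i (psi x' r) = v}"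
      using sub by (intro D(5)[rule_format]) auto
  qed
  show ?thesis unfolding is_3SS_def using D(1-3) c4 c5 by (intro conjI)
qed

definition Hard :: "secret set \<Rightarrow> bool" where
  "Hard S = (\<forall>R P psi. is_3SS S R P psi \<longrightarrow> 8 \<le> card R)"

lemma Hard_A0: "Hard A0"
  unfolding Hard_def using LBmain by blast

lemma Hard_mono: "Hard S \<Longrightarrow> S \<subseteq> S' \<Longrightarrow> Hard S'"
  unfolding Hard_def using is_3SS_mono by blast

lemma neg_transfer:
  assumes H: "is_3SS (negate i T) R P psi"
  shows "is_3SS T R P (\<lambda>x. psi (x(i := \<not> x i)))"
proof -
  note D = D3SS[OF H]
  have memT: "x(i := \<not> x i) \<in> negate i T" if "x \<in> T" for x
    using that unfolding negate_def by blast
  have c4: "\<forall>j. \<exists>phi. \<forall>x\<in>T. \<forall>r\<in>R. 0 < P r \<longrightarrow> phi (view j (psi (x(i := \<not> x i)) r)) = x j"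
  proof
    fix j
    obtain phi where ph: "\<forall>x\<in>negate i T. \<forall>r\<in>R. 0 < P r \<longrightarrow> phi (view j (psi x r)) = x j"
      using D(4) by blast
    have "\<forall>x\<in>T. \<forall>r\<in>R. 0 < P r \<longrightarrow> (if j = i then \<not> phi (view j (psi (x(i := \<not> x i)) r)) else phi (view j (psi (x(i := \<not> x i)) r))) = x j"
    proof (intro ballI impI)
      fix x r assume x: "x \<in> T" and r: "r \<in> R" "0 < P r"
      have "phi (view j (psi (x(i := \<not> x i)) r)) = (x(i := \<not> x i)) j"
        by (rule ph[rule_format, OF memT[OF x] r])
      thus "(if j = i then \<not> phi (view j (psi (x(i := \<not> x i)) r)) else phi (view j (psi (x(i := \<not> x i)) r))) = x j"
        by (cases "j = i") simp_all
    qed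
    thus "\<exists>phi. \<forall>x\<in>T. \<forall>r\<in>R. 0 < P r \<longrightarrow> phi (view j (psi (x(i := \<not> x i)) r)) = x j"
      by (intro exI[of _ "\<lambda>v. if j = i then \<not> phi v else phi v"])
  qed
  have c5: "\<forall>j. \<forall>x\<in>T. \<forall>x'\<in>T. x j = x' j \<longrightarrow>
        (\<forall>v. sum P {r\<in>R. view j (psi (x(i := \<not> x i)) r) = v} = sum P {r\<in>R. view j (psi (x'(i := \<not> x' i)) r) = v})"
  proof (intro allI ballI impI)
    fix j x x' v assume x: "x \<in> T" "x' \<in> T" "x j = x' j"
    have "(x(i := \<not> x i)) j = (x'(i := \<not> x' i)) j" using x(3) by (cases "j = i") simp_all
    thus "sum P {r\<in>R. view j (psi (x(i := \<not> x i)) r) = v} = sum P {r\<in>R. view j (psi (x'(i := \<not> x' i)) r) = v}"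
      by (rule D(5)[rule_format, OF memT[OF x(1)] memT[OF x(2)]])
  qed
  show ?thesis unfolding is_3SS_def using D(1-3) c4 c5 by (intro conjI)
qed

lemma Hard_neg: "Hard T \<Longrightarrow> Hard (negate i T)"
  unfolding Hard_def using neg_transfer by blast


fun sh :: "shares \<Rightarrow> idx \<Rightarrow> idx \<Rightarrow> nat" where
  "sh (a,b,c) I1 I2 = a" | "sh (a,b,c) I2 I1 = a"
| "sh (a,b,c) I2 I3 = b" | "sh (a,b,c) I3 I2 = b"
| "sh (a,b,c) I3 I1 = c" | "sh (a,b,c) I1 I3 = c"
| "sh (a,b,c) _ _ = 0"

definition rsh :: "(idx \<Rightarrow> idx) \<Rightarrow> shares \<Rightarrow> shares" where
  "rsh \<tau> w = (sh w (\<tau> I1) (\<tau> I2), sh w (\<tau> I2) (\<tau> I3), sh w (\<tau> I3) (\<tau> I1))"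

definition swp :: "bool \<Rightarrow> nat \<times> nat \<Rightarrow> nat \<times> nat" where
  "swp c v = (if c then prod.swap v else v)"

fun nxt :: "idx \<Rightarrow> idx" where "nxt I1 = I2" | "nxt I2 = I3" | "nxt I3 = I1"

lemma swp_swp[simp]: "swp c (swp c v) = v" by (simp add: swp_def)
lemma swp_eq: "(swp c a = v) = (a = swp c v)" by (auto simp: swp_def)

lemma rsh_view:
  assumes "inj \<tau>"
  shows "view j (rsh \<tau> w) = swp (\<tau> (nxt j) \<noteq> nxt (\<tau> j)) (view (\<tau> j) w)"
proof -
  have d: "\<tau> I1 \<noteq> \<tau> I2" "\<tau> I2 \<noteq> \<tau> I3" "\<tau> I1 \<noteq> \<tau> I3" using assms by (auto simp: inj_eq)
  obtain a b c where w: "w = (a,b,c)" by (cases w)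
  show ?thesis using d unfolding w
    by (cases j; cases "\<tau> I1"; cases "\<tau> I2"; cases "\<tau> I3") (simp_all add: rsh_def swp_def)
qed

lemma perm_transfer:
  assumes H: "is_3SS (permute \<sigma> T) R P psi" and b: "bij \<sigma>"
  shows "is_3SS T R P (\<lambda>x r. rsh (inv \<sigma>) (psi (x \<circ> \<sigma>) r))"
proof -
  note D = D3SS[OF H]
  define \<tau> where "\<tau> = inv \<sigma>"
  have injt: "inj \<tau>" unfolding \<tau>_def using b bij_imp_bij_inv bij_is_inj by blast
  have st: "\<sigma> (\<tau> j) = j" for j unfolding \<tau>_def using b by (simp add: bij_is_surj surj_f_inv_f)
  define cc where "cc j = (\<tau> (nxt j) \<noteq> nxt (\<tau> j))" for j
  have rv: "view j (rsh \<tau> w) = swp (cc j) (view (\<tau> j) w)" for j w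
    unfolding cc_def by (rule rsh_view[OF injt])
  have memT: "x \<circ> \<sigma> \<in> permute \<sigma> T" if "x \<in> T" for x
    using that unfolding permute_def by blast
  have c4: "\<forall>j. \<exists>phi. \<forall>x\<in>T. \<forall>r\<in>R. 0 < P r \<longrightarrow> phi (view j (rsh \<tau> (psi (x \<circ> \<sigma>) r))) = x j"
  proof
    fix j
    obtain phi where ph: "\<forall>x\<in>permute \<sigma> T. \<forall>r\<in>R. 0 < P r \<longrightarrow> phi (view (\<tau> j) (psi x r)) = x (\<tau> j)"
      using D(4) by blast
    have "\<forall>x\<in>T. \<forall>r\<in>R. 0 < P r \<longrightarrow> phi (swp (cc j) (view j (rsh \<tau> (psi (x \<circ> \<sigma>) r)))) = x j"
    proof (intro ballI impI)
      fix x r assume x: "x \<in> T" and r: "r \<in> R" "0 < P r"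
      have "phi (view (\<tau> j) (psi (x \<circ> \<sigma>) r)) = (x \<circ> \<sigma>) (\<tau> j)"
        by (rule ph[rule_format, OF memT[OF x] r])
      thus "phi (swp (cc j) (view j (rsh \<tau> (psi (x \<circ> \<sigma>) r)))) = x j"
        by (simp add: rv st)
    qed
    thus "\<exists>phi. \<forall>x\<in>T. \<forall>r\<in>R. 0 < P r \<longrightarrow> phi (view j (rsh \<tau> (psi (x \<circ> \<sigma>) r))) = x j"
      by (intro exI[of _ "\<lambda>v. phi (swp (cc j) v)"])
  qed
  have c5: "\<forall>j. \<forall>x\<in>T. \<forall>x'\<in>T. x j = x' j \<longrightarrow>
        (\<forall>v. sum P {r\<in>R. view j (rsh \<tau> (psi (x \<circ> \<sigma>) r)) = v} = sum P {r\<in>R. view j (rsh \<tau> (psi (x' \<circ> \<sigma>) r)) = v})"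
  proof (intro allI ballI impI)
    fix j x x' v assume x: "x \<in> T" "x' \<in> T" "x j = x' j"
    have e: "(x \<circ> \<sigma>) (\<tau> j) = (x' \<circ> \<sigma>) (\<tau> j)" using x(3) by (simp add: st)
    have "sum P {r\<in>R. view (\<tau> j) (psi (x \<circ> \<sigma>) r) = swp (cc j) v} = sum P {r\<in>R. view (\<tau> j) (psi (x' \<circ> \<sigma>) r) = swp (cc j) v}"
      by (rule D(5)[rule_format, OF memT[OF x(1)] memT[OF x(2)] e])
    thus "sum P {r\<in>R. view j (rsh \<tau> (psi (x \<circ> \<sigma>) r)) = v} = sum P {r\<in>R. view j (rsh \<tau> (psi (x' \<circ> \<sigma>) r)) = v}"
      by (simp add: rv swp_eq)
  qed
  show ?thesis unfolding is_3SS_def \<tau>_def[symmetric] using D(1-3) c4 c5 by (intro conjI)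
qed

lemma Hard_perm: "Hard T \<Longrightarrow> bij \<sigma> \<Longrightarrow> Hard (permute \<sigma> T)"
  unfolding Hard_def using perm_transfer by blast

lemma Hard_equiv: "S \<in> equiv_sets S0 \<Longrightarrow> Hard S0 \<Longrightarrow> Hard S"
  by (induction S rule: equiv_sets.induct) (auto intro: Hard_neg Hard_perm)


definition enc :: "bool \<Rightarrow> nat" where "enc b = (if b then 1 else 0)"
definition rb0 :: "nat \<Rightarrow> bool" where "rb0 r = odd r"
definition rb1 :: "nat \<Rightarrow> bool" where "rb1 r = odd (r div 2)"
definition rb2 :: "nat \<Rightarrow> bool" where "rb2 r = odd (r div 4)"
definition mk :: "bool \<Rightarrow> bool \<Rightarrow> bool \<Rightarrow> nat" where "mk a b c = enc a + 2 * enc b + 4 * enc c"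
definition fl :: "bool \<Rightarrow> bool \<Rightarrow> bool \<Rightarrow> nat \<Rightarrow> nat" where
  "fl m0 m1 m2 r = mk (rb0 r \<noteq> m0) (rb1 r \<noteq> m1) (rb2 r \<noteq> m2)"

definition psi8 :: "secret \<Rightarrow> nat \<Rightarrow> shares" where
  "psi8 x r = (2 * enc (rb0 r) + enc (rb1 r), 2 * enc (rb1 r \<noteq> x I2) + enc (rb2 r),
               2 * enc (rb2 r \<noteq> x I3) + enc (rb0 r \<noteq> x I1))"

lemma rb_mk[simp]: "rb0 (mk a b c) = a" "rb1 (mk a b c) = b" "rb2 (mk a b c) = c"
  by (cases a; cases b; cases c; simp add: mk_def enc_def rb0_def rb1_def rb2_def)+

lemma mk_lt[simp]: "mk a b c < 8"
  by (cases a; cases b; cases c; simp add: mk_def enc_def)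

lemma lt8: "(r::nat) < 8 \<Longrightarrow> r = 0 \<or> r = 1 \<or> r = 2 \<or> r = 3 \<or> r = 4 \<or> r = 5 \<or> r = 6 \<or> r = 7"
  by arith

lemma mk_rb: "r < 8 \<Longrightarrow> mk (rb0 r) (rb1 r) (rb2 r) = r"
  by (drule lt8) (auto simp: mk_def enc_def rb0_def rb1_def rb2_def)

lemma fl_fl: "r < 8 \<Longrightarrow> fl m0 m1 m2 (fl m0 m1 m2 r) = r"
  by (cases m0; cases m1; cases m2) (simp_all add: fl_def mk_rb)

lemma fl_rb[simp]: "rb0 (fl m0 m1 m2 r) = (rb0 r \<noteq> m0)" "rb1 (fl m0 m1 m2 r) = (rb1 r \<noteq> m1)"
  "rb2 (fl m0 m1 m2 r) = (rb2 r \<noteq> m2)"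
  by (simp_all add: fl_def)

lemma enc_pair[simp]: "(2 * enc a + enc b = 2 * enc c + enc d) = (a = c \<and> b = d)"
  by (cases a; cases b; cases c; cases d; simp add: enc_def)

lemma enc_eq[simp]: "(enc a = enc b) = (a = b)" by (simp add: enc_def)

lemma fl_bij: "bij_betw (fl m0 m1 m2) {0..<8} {0..<8}"
proof (rule bij_betw_byWitness[where f'="fl m0 m1 m2"])
  show "\<forall>a\<in>{0..<8}. fl m0 m1 m2 (fl m0 m1 m2 a) = a" by (simp add: fl_fl)
  show "\<forall>a'\<in>{0..<8}. fl m0 m1 m2 (fl m0 m1 m2 a') = a'" by (simp add: fl_fl)
  show "fl m0 m1 m2 ` {0..<8} \<subseteq> {0..<8}" by (auto simp: fl_def)
  show "fl m0 m1 m2 ` {0..<8} \<subseteq> {0..<8}" by (auto simp: fl_def)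
qed

lemma priv_bij:
  assumes b: "bij_betw h R R" and e: "\<forall>r\<in>R. f (h r) = g r" and fin: "finite R"
  shows "sum (\<lambda>_. c::real) {r\<in>R. g r = v} = sum (\<lambda>_. c) {r\<in>R. f r = v}"
proof -
  have inj: "inj_on h {r\<in>R. g r = v}" using b unfolding bij_betw_def by (auto intro: inj_on_subset)
  have im: "h ` {r\<in>R. g r = v} = {r\<in>R. f r = v}"
  proof
    show "h ` {r\<in>R. g r = v} \<subseteq> {r\<in>R. f r = v}" using b e unfolding bij_betw_def by auto
    show "{r\<in>R. f r = v} \<subseteq> h ` {r\<in>R. g r = v}"
    proof
      fix r' assume r': "r' \<in> {r\<in>R. f r = v}"
      then obtain r where r: "r \<in> R" "r' = h r" using b unfolding bij_betw_def by auto
      hence "g r = v" using e r' by auto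
      thus "r' \<in> h ` {r\<in>R. g r = v}" using r by blast
    qed
  qed
  have "card {r\<in>R. g r = v} = card {r\<in>R. f r = v}"
    using card_image[OF inj] im by simp
  thus ?thesis by simp
qed

lemma UB: "is_3SS UNIV {0..<8} (\<lambda>_. 1/8) psi8"
proof -
  have c4: "\<forall>i. \<exists>phi. \<forall>x\<in>(UNIV::secret set). \<forall>r\<in>{0..<8::nat}. 0 < (1/8::real) \<longrightarrow> phi (view i (psi8 x r)) = x i"
  proof
    fix i show "\<exists>phi. \<forall>x\<in>(UNIV::secret set). \<forall>r\<in>{0..<8::nat}. 0 < (1/8::real) \<longrightarrow> phi (view i (psi8 x r)) = x i"
    proof (cases i)
      case I1 thus ?thesis
        by (intro exI[of _ "\<lambda>(a,b). odd b \<noteq> odd (a div 2)"])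
           (auto simp: psi8_def enc_def split: if_splits)
    next
      case I2 thus ?thesis
        by (intro exI[of _ "\<lambda>(a,b). odd (a div 2) \<noteq> odd b"])
           (auto simp: psi8_def enc_def split: if_splits)
    next
      case I3 thus ?thesis
        by (intro exI[of _ "\<lambda>(a,b). odd (a div 2) \<noteq> odd b"])
           (auto simp: psi8_def enc_def split: if_splits)
    qed
  qed
  have c5: "\<forall>i. \<forall>x\<in>(UNIV::secret set). \<forall>x'\<in>UNIV. x i = x' i \<longrightarrow>
        (\<forall>v. sum (\<lambda>_. 1/8::real) {r\<in>{0..<8}. view i (psi8 x r) = v} = sum (\<lambda>_. 1/8) {r\<in>{0..<8}. view i (psi8 x' r) = v})"
  proof (intro allI ballI impI)
    fix i x x' v assume e: "(x::secret) i = x' i"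
    show "sum (\<lambda>_. 1/8::real) {r\<in>{0..<8}. view i (psi8 x r) = v} = sum (\<lambda>_. 1/8) {r\<in>{0..<8}. view i (psi8 x' r) = v}"
    proof (cases i)
      case I1
      have h: "\<forall>r\<in>{0..<8}. view I1 (psi8 x' (fl False False (x I3 \<noteq> x' I3) r)) = view I1 (psi8 x r)"
        using e[unfolded I1] by (cases "x I3"; cases "x' I3"; cases "x I1"; cases "x' I1") (simp_all add: psi8_def)
      show ?thesis unfolding I1 by (rule priv_bij[OF fl_bij h]) simp
    next
      case I2
      have h: "\<forall>r\<in>{0..<8}. view I2 (psi8 x' (fl False False False r)) = view I2 (psi8 x r)"
        using e[unfolded I2] by (cases "x I2"; cases "x' I2") (simp_all add: psi8_def)
      show ?thesis unfolding I2 by (rule priv_bij[OF fl_bij h]) simp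
    next
      case I3
      have h: "\<forall>r\<in>{0..<8}. view I3 (psi8 x' (fl (x I1 \<noteq> x' I1) (x I2 \<noteq> x' I2) False r)) = view I3 (psi8 x r)"
        using e[unfolded I3] by (cases "x I3"; cases "x' I3"; cases "x I1"; cases "x' I1"; cases "x I2"; cases "x' I2") (simp_all add: psi8_def)
      show ?thesis unfolding I3 by (rule priv_bij[OF fl_bij h]) simp
    qed
  qed
  have s8: "sum (\<lambda>_. 1/8::real) {0..<8::nat} = 1" by simp
  show ?thesis unfolding is_3SS_def
    by (intro conjI) (simp, simp, rule s8, rule c4, rule c5)
qed


lemma log28: "log 2 (8::real) = 3"
proof -
  have "log 2 (8::real) = log 2 (2 ^ 3)" by simp
  also have "\<dots> = 3" by (subst log_nat_power) simp_all
  finally show ?thesis .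
qed

lemma rho3: assumes H: "Hard S" shows "rho S = 3"
proof -
  have "is_3SS S {0..<8} (\<lambda>_. 1/8) psi8" using is_3SS_mono[OF UB] by simp
  hence ex: "\<exists>R P psi. is_3SS S R P psi \<and> card R = 8" by fastforce
  have "(LEAST n. \<exists>R P psi. is_3SS S R P psi \<and> card R = n) = 8"
  proof (rule Least_equality)
    show "\<exists>R P psi. is_3SS S R P psi \<and> card R = 8" by (rule ex)
    show "\<And>y. \<exists>R P psi. is_3SS S R P psi \<and> card R = y \<Longrightarrow> 8 \<le> y"
      using H unfolding Hard_def by blast
  qed
  thus ?thesis unfolding rho_def using log28 by simp
qed

lemma trip_eq: "(trip a b c = trip a' b' c') = ((a=1) = (a'=1) \<and> (b=1) = (b'=1) \<and> (c=1) = (c'=1))"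
proof
  assume h: "trip a b c = trip a' b' c'"
  hence "trip a b c I1 = trip a' b' c' I1" "trip a b c I2 = trip a' b' c' I2" "trip a b c I3 = trip a' b' c' I3"
    by simp_all
  thus "(a=1) = (a'=1) \<and> (b=1) = (b'=1) \<and> (c=1) = (c'=1)" by (simp add: trip_def)
next
  assume "(a=1) = (a'=1) \<and> (b=1) = (b'=1) \<and> (c=1) = (c'=1)"
  thus "trip a b c = trip a' b' c'" by (simp add: trip_def fun_eq_iff split: idx.split)
qed

fun sw13 :: "idx \<Rightarrow> idx" where "sw13 I1 = I3" | "sw13 I2 = I2" | "sw13 I3 = I1"

lemma trip_nxt: "trip a b c \<circ> nxt = trip b c a"
  by (rule ext, case_tac x) (simp_all add: trip_def)
lemma trip_sw13: "trip a b c \<circ> sw13 = trip c b a"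
  by (rule ext, case_tac x) (simp_all add: trip_def)

lemma bij_nxt: "bij nxt"
  by (rule o_bij[of "nxt \<circ> nxt"]) (rule ext, case_tac x, simp_all)+
lemma bij_sw13: "bij sw13"
  by (rule o_bij[of sw13]) (rule ext, case_tac x, simp_all)+

lemma Hard_B: "Hard {trip 0 0 0, trip 1 0 0, trip 0 0 1, trip 0 1 1}"
proof -
  have "Hard (permute nxt A0)" by (rule Hard_perm[OF Hard_A0 bij_nxt])
  moreover have "permute nxt A0 = {trip 0 0 0, trip 1 0 0, trip 0 0 1, trip 0 1 1}"
    unfolding permute_def A0_def by (simp add: trip_nxt)
  ultimately show ?thesis by simp
qed

lemma Hard_D: "Hard {trip 0 0 0, trip 0 1 0, trip 0 0 1, trip 1 0 1}"
proof -
  have "Hard (permute sw13 A0)" by (rule Hard_perm[OF Hard_A0 bij_sw13])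
  moreover have "permute sw13 A0 = {trip 0 0 0, trip 0 1 0, trip 0 0 1, trip 1 0 1}"
    unfolding permute_def A0_def by (simp add: trip_sw13)
  ultimately show ?thesis by simp
qed

theorem mainTheorem10:
  shows "\<forall>S0 \<in> {
      {trip 0 0 0, trip 0 1 0, trip 1 0 0, trip 1 0 1},
      {trip 0 0 0, trip 0 0 1, trip 0 1 0, trip 0 1 1, trip 1 0 0},
      {trip 0 0 0, trip 0 0 1, trip 0 1 0, trip 0 1 1, trip 1 0 0, trip 1 0 1},
      {trip 0 0 0, trip 0 0 1, trip 0 1 0, trip 1 0 1, trip 1 1 0},
      {trip 0 0 0, trip 0 0 1, trip 0 1 0, trip 0 1 1, trip 1 0 0, trip 1 1 1},
      {trip 0 0 0, trip 0 0 1, trip 0 1 0, trip 1 0 1, trip 1 1 0, trip 1 1 1},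
      UNIV - {trip 1 1 1},
      UNIV}.
    \<forall>S \<in> equiv_sets S0. rho S = 3"
proof (intro ballI)
  fix S0 S
  assume S0: "S0 \<in> {
      {trip 0 0 0, trip 0 1 0, trip 1 0 0, trip 1 0 1},
      {trip 0 0 0, trip 0 0 1, trip 0 1 0, trip 0 1 1, trip 1 0 0},
      {trip 0 0 0, trip 0 0 1, trip 0 1 0, trip 0 1 1, trip 1 0 0, trip 1 0 1},
      {trip 0 0 0, trip 0 0 1, trip 0 1 0, trip 1 0 1, trip 1 1 0},
      {trip 0 0 0, trip 0 0 1, trip 0 1 0, trip 0 1 1, trip 1 0 0, trip 1 1 1},
      {trip 0 0 0, trip 0 0 1, trip 0 1 0, trip 1 0 1, trip 1 1 0, trip 1 1 1},
      UNIV - {trip 1 1 1},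
      UNIV}" and S: "S \<in> equiv_sets S0"
  have "Hard S0"
    using S0
  proof (elim insertE emptyE)
    assume "S0 = {trip 0 0 0, trip 0 1 0, trip 1 0 0, trip 1 0 1}"
    thus "Hard S0" using Hard_A0 unfolding A0_def by simp
  next
    assume "S0 = {trip 0 0 0, trip 0 0 1, trip 0 1 0, trip 0 1 1, trip 1 0 0}"
    thus "Hard S0" by (rule ssubst) (rule Hard_mono[OF Hard_B], auto)
  next
    assume "S0 = {trip 0 0 0, trip 0 0 1, trip 0 1 0, trip 0 1 1, trip 1 0 0, trip 1 0 1}"
    thus "Hard S0" by (rule ssubst) (rule Hard_mono[OF Hard_A0], auto simp: A0_def)
  next
    assume "S0 = {trip 0 0 0, trip 0 0 1, trip 0 1 0, trip 1 0 1, trip 1 1 0}"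
    thus "Hard S0" by (rule ssubst) (rule Hard_mono[OF Hard_D], auto)
  next
    assume "S0 = {trip 0 0 0, trip 0 0 1, trip 0 1 0, trip 0 1 1, trip 1 0 0, trip 1 1 1}"
    thus "Hard S0" by (rule ssubst) (rule Hard_mono[OF Hard_B], auto)
  next
    assume "S0 = {trip 0 0 0, trip 0 0 1, trip 0 1 0, trip 1 0 1, trip 1 1 0, trip 1 1 1}"
    thus "Hard S0" by (rule ssubst) (rule Hard_mono[OF Hard_D], auto)
  next
    assume "S0 = UNIV - {trip 1 1 1}"
    thus "Hard S0" by (rule ssubst) (rule Hard_mono[OF Hard_A0], auto simp: A0_def trip_eq)
  next
    assume "S0 = UNIV"
    thus "Hard S0" by (rule ssubst) (rule Hard_mono[OF Hard_A0], auto)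
  qed
  thus "rho S = 3" using Hard_equiv[OF S] rho3 by blast
qed

end
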